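(* Let $P$ be a finite poset and $J$ a connected, nonprincipal order ideal of $P$. Then $J$ is nearly principal if and only if (a) $J$ has exactly two maximal elements $j_1,j_2$, and (b) for every common lower bound $\ell<_Pj_1,j_2$, the open intervals $]\ell,j_1[$ and $]\ell,j_2[$ coincide.
   Context: An order ideal of $P$ is a downward-closed subset; it is connected if it is nonempty and its induced Hasse diagram is connected, and principal if it equals $P_{\le p}=\{q:q\le_Pp\}$ for some $p$. Two connected order ideals intersect nontrivially if they are neither disjoint nor nested. A connected nonprincipal order ideal $J$ is nearly principal if there is exactly one unordered pair $\{J_1,J_2\}$ of connected order ideals intersecting nontrivially with $J_1\cup J_2=J$. The open interval $]\ell,j[=\{p:\ell<_Pp<_Pj\}$. *)

theory Defs
  imports Main
begin

text \<open>A finite poset is represented as a finite carrier set P inside a type of class order,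
  with the induced order.\<close>

definition order_ideal :: "'a::order set \<Rightarrow> 'a set \<Rightarrow> bool" where
  "order_ideal P J \<longleftrightarrow> J \<subseteq> P \<and> (\<forall>x\<in>J. \<forall>y\<in>P. y \<le> x \<longrightarrow> y \<in> J)"

definition covers :: "'a::order set \<Rightarrow> 'a \<Rightarrow> 'a \<Rightarrow> bool" where
  "covers P x y \<longleftrightarrow> x \<in> P \<and> y \<in> P \<and> x < y \<and> \<not> (\<exists>z\<in>P. x < z \<and> z < y)"

definition hasse_edges :: "'a::order set \<Rightarrow> 'a set \<Rightarrow> ('a \<times> 'a) set" where
  "hasse_edges P J = {(a, b). a \<in> J \<and> b \<in> J \<and> (covers P a b \<or> covers P b a)}"

definition connected_ideal :: "'a::order set \<Rightarrow> 'a set \<Rightarrow> bool" where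
  "connected_ideal P J \<longleftrightarrow> order_ideal P J \<and> J \<noteq> {} \<and>
     (\<forall>x\<in>J. \<forall>y\<in>J. (x, y) \<in> (hasse_edges P J)\<^sup>*)"

definition principal_ideal :: "'a::order set \<Rightarrow> 'a set \<Rightarrow> bool" where
  "principal_ideal P J \<longleftrightarrow> (\<exists>p\<in>P. J = {q\<in>P. q \<le> p})"

definition intersect_nontrivially :: "'a set \<Rightarrow> 'a set \<Rightarrow> bool" where
  "intersect_nontrivially J1 J2 \<longleftrightarrow> J1 \<inter> J2 \<noteq> {} \<and> \<not> J1 \<subseteq> J2 \<and> \<not> J2 \<subseteq> J1"

definition nearly_principal :: "'a::order set \<Rightarrow> 'a set \<Rightarrow> bool" where
  "nearly_principal P J \<longleftrightarrow> connected_ideal P J \<and> \<not> principal_ideal P J \<and>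
     card {{J1, J2} | J1 J2. connected_ideal P J1 \<and> connected_ideal P J2 \<and>
                            intersect_nontrivially J1 J2 \<and> J1 \<union> J2 = J} = 1"

definition maximal_elems :: "'a::order set \<Rightarrow> 'a set" where
  "maximal_elems J = {j\<in>J. \<not> (\<exists>x\<in>J. j < x)}"

definition open_interval :: "'a::order set \<Rightarrow> 'a \<Rightarrow> 'a \<Rightarrow> 'a set" where
  "open_interval P l j = {p\<in>P. l < p \<and> p < j}"

end

theory Submission
  imports Defs
begin

abbreviation dn :: "'a::order set \<Rightarrow> 'a \<Rightarrow> 'a set" where
  "dn P p \<equiv> {q\<in>P. q \<le> p}"

abbreviation UU :: "'a::order set \<Rightarrow> 'a set \<Rightarrow> 'a set" where
  "UU P S \<equiv> {q\<in>P. \<exists>s\<in>S. q \<le> s}"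

lemma hasse_sym: "(x,y) \<in> hasse_edges P S \<Longrightarrow> (y,x) \<in> hasse_edges P S"
  by (auto simp: hasse_edges_def)

lemma rtr_sym: "(x,y) \<in> (hasse_edges P S)\<^sup>* \<Longrightarrow> (y,x) \<in> (hasse_edges P S)\<^sup>*"
proof (induction rule: rtrancl_induct)
  case base then show ?case by simp
next
  case (step y z) then show ?case by (meson converse_rtrancl_into_rtrancl hasse_sym)
qed

lemma rtr_mono: "(x,y) \<in> (hasse_edges P S)\<^sup>* \<Longrightarrow> S \<subseteq> T \<Longrightarrow> (x,y) \<in> (hasse_edges P T)\<^sup>*"
proof -
  assume a: "(x,y) \<in> (hasse_edges P S)\<^sup>*" and b: "S \<subseteq> T"
  have "hasse_edges P S \<subseteq> hasse_edges P T" using b by (auto simp: hasse_edges_def)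
  then show ?thesis using a rtrancl_mono by blast
qed

lemma cover_exists:
  assumes "finite P" "q\<in>P" "p\<in>P" "q<p"
  shows "\<exists>r\<in>P. covers P q r \<and> r \<le> p"
proof -
  let ?A = "{r\<in>P. q<r \<and> r\<le>p}"
  have "finite ?A" using assms by simp
  moreover have "?A \<noteq> {}" using assms by auto
  ultimately obtain r where r: "r\<in>?A" "\<forall>b\<in>?A. b \<le> r \<longrightarrow> r = b"
    using finite_has_minimal by blast
  have "\<not> (\<exists>z\<in>P. q < z \<and> z < r)"
  proof
    assume "\<exists>z\<in>P. q < z \<and> z < r"
    then obtain z where z: "z\<in>P" "q<z" "z<r" by blast
    then have "z \<in> ?A" using r by auto
    then show False using r z by fastforce
  qed
  then show ?thesis using r assms by (auto simp: covers_def)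
qed

lemma chain:
  assumes "finite P" "p\<in>P" "q\<in>P" "q \<le> p" "{r\<in>P. q \<le> r \<and> r \<le> p} \<subseteq> S"
  shows "(q,p) \<in> (hasse_edges P S)\<^sup>*"
  using assms
proof (induction "card {r\<in>P. q<r \<and> r\<le>p}" arbitrary: q rule: less_induct)
  case less
  show ?case
  proof (cases "q = p")
    case True then show ?thesis by simp
  next
    case False
    then have "q<p" using less by simp
    then obtain r where r: "r\<in>P" "covers P q r" "r \<le> p" using cover_exists less.prems by blast
    have qr: "q<r" using r by (simp add: covers_def)
    have sub: "{r'\<in>P. r<r' \<and> r'\<le>p} \<subset> {r'\<in>P. q<r' \<and> r'\<le>p}"
      using qr r by (auto intro: less_trans)
    have "card {r'\<in>P. r<r' \<and> r'\<le>p} < card {r'\<in>P. q<r' \<and> r'\<le>p}"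
      using sub less.prems(1) by (intro psubset_card_mono) auto
    moreover have "{r'\<in>P. r \<le> r' \<and> r' \<le> p} \<subseteq> S" using less.prems(5) qr by (auto intro: less_le_trans)
    ultimately have "(r,p) \<in> (hasse_edges P S)\<^sup>*" using less.hyps less.prems r by blast
    moreover have "(q,r) \<in> hasse_edges P S"
      using r less.prems qr by (auto simp: hasse_edges_def)
    ultimately show ?thesis by (meson converse_rtrancl_into_rtrancl)
  qed
qed

lemma dn_connected:
  assumes "finite P" "p\<in>P"
  shows "connected_ideal P (dn P p)"
proof -
  have c: "\<forall>x\<in>dn P p. \<forall>y\<in>dn P p. (x,y) \<in> (hasse_edges P (dn P p))\<^sup>*"
  proof (intro ballI)
    fix x y assume x: "x \<in> dn P p" and y: "y \<in> dn P p"
    have "(x,p) \<in> (hasse_edges P (dn P p))\<^sup>*" using x assms by (intro chain) auto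
    moreover have "(y,p) \<in> (hasse_edges P (dn P p))\<^sup>*" using y assms by (intro chain) auto
    then have "(p,y) \<in> (hasse_edges P (dn P p))\<^sup>*" by (rule rtr_sym)
    ultimately show "(x,y) \<in> (hasse_edges P (dn P p))\<^sup>*" by (rule rtrancl_trans)
  qed
  have i: "order_ideal P (dn P p)" by (auto simp: order_ideal_def intro: order_trans)
  have "dn P p \<noteq> {}" using assms by auto
  then show ?thesis using c i by (simp add: connected_ideal_def)
qed

lemma union_connected:
  assumes A: "connected_ideal P A" and B: "connected_ideal P B" and z: "z \<in> A \<inter> B"
  shows "connected_ideal P (A \<union> B)"
proof -
  have all: "(x,z) \<in> (hasse_edges P (A\<union>B))\<^sup>*" if "x \<in> A \<union> B" for x
  proof -
    have "(x,z) \<in> (hasse_edges P A)\<^sup>* \<or> (x,z) \<in> (hasse_edges P B)\<^sup>*"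
      using that A B z by (auto simp: connected_ideal_def)
    then show ?thesis using rtr_mono by blast
  qed
  have i: "order_ideal P (A \<union> B)" using A B unfolding connected_ideal_def order_ideal_def by auto
  have c: "\<forall>x\<in>A\<union>B. \<forall>y\<in>A\<union>B. (x,y) \<in> (hasse_edges P (A\<union>B))\<^sup>*"
  proof (intro ballI)
    fix x y assume "x \<in> A\<union>B" "y \<in> A\<union>B"
    then have "(x,z) \<in> (hasse_edges P (A\<union>B))\<^sup>*" "(y,z) \<in> (hasse_edges P (A\<union>B))\<^sup>*"
      using all by auto
    then have "(x,z) \<in> (hasse_edges P (A\<union>B))\<^sup>*" "(z,y) \<in> (hasse_edges P (A\<union>B))\<^sup>*"
      using rtr_sym by auto
    then show "(x,y) \<in> (hasse_edges P (A\<union>B))\<^sup>*" by (rule rtrancl_trans)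
  qed
  show ?thesis using i c z unfolding connected_ideal_def by blast
qed

lemma exit_edge: "(a,b) \<in> R\<^sup>* \<Longrightarrow> a\<in>A \<Longrightarrow> b\<notin>A \<Longrightarrow> \<exists>u v. (u,v)\<in>R \<and> u\<in>A \<and> v\<notin>A"
  by (induction rule: rtrancl_induct) blast+

lemma disconnect:
  assumes "connected_ideal P J" "order_ideal P A" "order_ideal P B" "A \<union> B = J" "A \<noteq> {}" "B \<noteq> {}"
  shows "A \<inter> B \<noteq> {}"
proof
  assume dis: "A \<inter> B = {}"
  obtain a b where ab: "a \<in> A" "b \<in> B" using assms by blast
  then have "(a,b) \<in> (hasse_edges P J)\<^sup>*" "b \<notin> A" using assms dis by (auto simp: connected_ideal_def)
  then obtain u v where uv: "(u,v) \<in> hasse_edges P J" "u\<in>A" "v\<notin>A" using exit_edge ab by metis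
  then have "v \<in> B" using assms by (auto simp: hasse_edges_def)
  have uP: "u \<in> P" "v \<in> P" using uv by (auto simp: hasse_edges_def covers_def)
  have "covers P u v \<or> covers P v u" using uv by (auto simp: hasse_edges_def)
  then show False
  proof
    assume "covers P u v"
    then have "u \<le> v" by (simp add: covers_def less_imp_le)
    then have "u \<in> B" using \<open>v \<in> B\<close> uP assms(3) unfolding order_ideal_def by blast
    then show False using uv dis by blast
  next
    assume "covers P v u"
    then have "v \<le> u" by (simp add: covers_def less_imp_le)
    then have "v \<in> A" using uv uP assms(2) unfolding order_ideal_def by blast
    then show False using uv by blast
  qed
qed

lemma below_max: "finite J \<Longrightarrow> x\<in>J \<Longrightarrow> \<exists>m\<in>maximal_elems J. x \<le> m"
  using finite_has_maximal2[of J x] by (auto simp: maximal_elems_def less_le)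


abbreviation pairs :: "'a::order set \<Rightarrow> 'a set \<Rightarrow> 'a set set set" where
  "pairs P J \<equiv> {{J1, J2} | J1 J2. connected_ideal P J1 \<and> connected_ideal P J2 \<and>
                            intersect_nontrivially J1 J2 \<and> J1 \<union> J2 = J}"

lemma UU_ideal: "order_ideal P (UU P S)"
  by (auto simp: order_ideal_def intro: order_trans)

lemma dn_ideal: "order_ideal P (dn P p)"
  by (auto simp: order_ideal_def intro: order_trans)

lemma UU_Un: "UU P A \<union> UU P B = UU P (A \<union> B)" by auto

lemma UU_single: "UU P {m} = dn P m" by auto

lemma ideal_dn_sub: "order_ideal P K \<Longrightarrow> a \<in> K \<Longrightarrow> dn P a \<subseteq> K"
  by (auto simp: order_ideal_def)

lemma card_ne1: "x \<in> X \<Longrightarrow> y \<in> X \<Longrightarrow> x \<noteq> y \<Longrightarrow> card X \<noteq> 1"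
  by (metis card_1_singletonE singletonD)

context
  fixes P J :: "'a::order set"
  assumes fin: "finite P" and conn: "connected_ideal P J"
begin

lemma JP: "J \<subseteq> P" using conn by (simp add: connected_ideal_def order_ideal_def)
lemma Jideal: "order_ideal P J" using conn by (simp add: connected_ideal_def)
lemma finJ: "finite J" using fin JP finite_subset by blast
lemma MJ: "maximal_elems J \<subseteq> J" by (auto simp: maximal_elems_def)
lemma MP: "m \<in> maximal_elems J \<Longrightarrow> m \<in> P" using MJ JP by blast
lemma finM: "finite (maximal_elems J)" using finJ MJ finite_subset by blast
lemma Mmax: "m \<in> maximal_elems J \<Longrightarrow> x \<in> J \<Longrightarrow> m \<le> x \<Longrightarrow> x = m"
  by (auto simp: maximal_elems_def less_le)

lemma JU: "J = UU P (maximal_elems J)"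
proof
  show "J \<subseteq> UU P (maximal_elems J)" using below_max[OF finJ] JP by blast
  show "UU P (maximal_elems J) \<subseteq> J" using MJ Jideal by (auto simp: order_ideal_def)
qed

lemma noncut:
  assumes m0: "m0 \<in> maximal_elems J" and ns: "maximal_elems J \<noteq> {m0}"
  shows "\<exists>m\<in>maximal_elems J. m \<noteq> m0 \<and> connected_ideal P (UU P (maximal_elems J - {m}))"
proof -
  let ?M = "maximal_elems J"
  have key: "m0 \<in> S \<Longrightarrow> S \<subseteq> ?M \<Longrightarrow> S \<noteq> ?M \<Longrightarrow> connected_ideal P (UU P S) \<Longrightarrow> ?thesis" for S
  proof (induction "card (?M - S)" arbitrary: S rule: less_induct)
    case less
    let ?T = "?M - S"
    have Tne: "?T \<noteq> {}" using less.prems by auto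
    have finT: "finite ?T" using finM by simp
    show ?case
    proof (cases "card ?T = 1")
      case True
      obtain m where m: "?T = {m}" using card_1_singletonE[OF True] by blast
      then have "S = ?M - {m}" "m \<in> ?M" "m \<noteq> m0" using less.prems by auto
      then show ?thesis using less.prems by blast
    next
      case False
      have "card ?T \<noteq> 0" using Tne finT by simp
      then have cT: "card ?T \<ge> 2" using False by linarith
      have "\<exists>t\<in>?T. dn P t \<inter> UU P S \<noteq> {}"
      proof (rule ccontr)
        assume no: "\<not> (\<exists>t\<in>?T. dn P t \<inter> UU P S \<noteq> {})"
        have un: "UU P S \<union> UU P ?T = J" using JU less.prems(2) by (auto simp: UU_Un)
        have ne1: "UU P S \<noteq> {}" using less.prems(1) MP m0 by auto
        obtain t where "t \<in> ?T" using Tne by blast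
        then have ne2: "UU P ?T \<noteq> {}" using MP by auto
        have "UU P S \<inter> UU P ?T \<noteq> {}"
          using disconnect[OF conn UU_ideal UU_ideal un ne1 ne2] .
        then show False using no by blast
      qed
      then obtain t where t: "t \<in> ?T" "dn P t \<inter> UU P S \<noteq> {}" by blast
      then obtain z where z: "z \<in> dn P t \<inter> UU P S" by blast
      have "connected_ideal P (dn P t \<union> UU P S)"
        using union_connected[OF dn_connected[OF fin MP] less.prems(4) z] t by blast
      moreover have "dn P t \<union> UU P S = UU P (insert t S)" by auto
      ultimately have c: "connected_ideal P (UU P (insert t S))" by simp
      have "card (?T - {t}) \<noteq> 0" using cT finT t(1) by simp
      then have "?T - {t} \<noteq> {}" by (metis card.empty)
      then have ne: "insert t S \<noteq> ?M" by blast
      have eq: "?M - insert t S = ?T - {t}" by blast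
      have "card (?M - insert t S) < card ?T" unfolding eq using finT t(1) by (rule card_Diff1_less)
      then show ?thesis using less.hyps[of "insert t S"] less.prems t c ne by blast
    qed
  qed
  show ?thesis
    apply (rule key[of "{m0}"])
    using m0 ns dn_connected[OF fin MP[OF m0]] by (auto simp: UU_single)
qed

lemma pair_from:
  assumes m: "m \<in> maximal_elems J" and ne: "maximal_elems J - {m} \<noteq> {}"
    and c: "connected_ideal P (UU P (maximal_elems J - {m}))"
  shows "{dn P m, UU P (maximal_elems J - {m})} \<in> pairs P J"
proof -
  let ?M = "maximal_elems J"
  let ?A = "dn P m" and ?B = "UU P (?M - {m})"
  have cA: "connected_ideal P ?A" using dn_connected[OF fin MP[OF m]] .
  have un: "?A \<union> ?B = J"
  proof -
    have "?A \<union> ?B = UU P ({m} \<union> (?M - {m}))" by (auto simp: UU_Un[symmetric])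
    also have "{m} \<union> (?M - {m}) = ?M" using m by blast
    finally show ?thesis using JU by simp
  qed
  obtain m' where m': "m' \<in> ?M" "m' \<noteq> m" using ne by blast
  have mA: "m \<in> ?A" using MP[OF m] by simp
  have m'B: "m' \<in> ?B" using MP[OF m'(1)] m' by auto
  have "?A \<inter> ?B \<noteq> {}"
    using disconnect[OF conn dn_ideal UU_ideal un] mA m'B by blast
  moreover have "m \<notin> ?B"
  proof
    assume "m \<in> ?B"
    then obtain s where "s \<in> ?M" "s \<noteq> m" "m \<le> s" by auto
    then show False using Mmax[OF m] MJ by blast
  qed
  moreover have "m' \<notin> ?A"
  proof
    assume "m' \<in> ?A"
    then have "m' \<le> m" by simp
    then show False using Mmax[OF m'(1)] MJ m m' by blast
  qed
  ultimately have "intersect_nontrivially ?A ?B"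
    unfolding intersect_nontrivially_def using mA m'B by blast
  then show ?thesis using cA c un by blast
qed

lemma Jab: "maximal_elems J = {a,b} \<Longrightarrow> J = dn P a \<union> dn P b"
  using JU by auto

lemma pair_two:
  assumes M: "maximal_elems J = {a,b}" and ab: "a \<noteq> b"
  shows "{dn P a, dn P b} \<in> pairs P J"
proof -
  have a: "a \<in> maximal_elems J" using M by simp
  have e: "maximal_elems J - {a} = {b}" using M ab by auto
  have "connected_ideal P (UU P {b})" unfolding UU_single
    using dn_connected[OF fin MP] M by simp
  then show ?thesis using pair_from[OF a] e by (simp add: UU_single)
qed

lemma second_pair:
  assumes M: "maximal_elems J = {a,b}" and ab: "a \<noteq> b"
    and l: "l \<in> P" "l < a" "l < b"
    and p1: "p \<in> open_interval P l a" and p2: "p \<notin> open_interval P l b"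
  shows "{dn P a, dn P b \<union> dn P p} \<in> pairs P J \<and> {dn P a, dn P b \<union> dn P p} \<noteq> {dn P a, dn P b}"
proof -
  have aM: "a \<in> maximal_elems J" and bM: "b \<in> maximal_elems J" using M by auto
  have p: "p \<in> P" "l < p" "p < a" using p1 by (auto simp: open_interval_def)
  have npb: "\<not> p < b" using p2 p by (auto simp: open_interval_def)
  have nab: "\<not> a \<le> b" using Mmax[OF aM] MJ bM ab by blast
  have nba: "\<not> b \<le> a" using Mmax[OF bM] MJ aM ab by blast
  let ?K = "dn P b \<union> dn P p"
  have cK: "connected_ideal P ?K"
    using union_connected[OF dn_connected[OF fin MP[OF bM]] dn_connected[OF fin p(1)], of l]
      l p by (auto intro: less_imp_le)
  have cA: "connected_ideal P (dn P a)" using dn_connected[OF fin MP[OF aM]] .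
  have un: "dn P a \<union> ?K = J" using Jab[OF M] p by (auto dest: order.strict_implies_order intro: order_trans)
  have aK: "a \<notin> ?K" using nab p by auto
  have bA: "b \<in> ?K" "b \<notin> dn P a" using MP[OF bM] nba by auto
  have "intersect_nontrivially (dn P a) ?K"
    unfolding intersect_nontrivially_def using l aK bA MP[OF aM] by (auto intro: less_imp_le)
  then have mem: "{dn P a, ?K} \<in> pairs P J" using cK cA un by blast
  have "?K \<noteq> dn P a" using bA by blast
  moreover have "?K \<noteq> dn P b"
  proof
    assume "?K = dn P b"
    then have "p \<le> b" using p by auto
    moreover have "p \<noteq> b" using p nba by auto
    ultimately show False using npb by simp
  qed
  ultimately show ?thesis using mem by (auto simp: doubleton_eq_iff)
qed

lemma uniq:
  assumes M: "maximal_elems J = {a,b}" and ab: "a \<noteq> b"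
    and bc: "\<forall>l\<in>P. l < a \<and> l < b \<longrightarrow> open_interval P l a = open_interval P l b"
    and K: "connected_ideal P K" "K \<subseteq> J" "a \<in> K" "b \<notin> K"
  shows "K = dn P a"
proof
  have aM: "a \<in> maximal_elems J" and bM: "b \<in> maximal_elems J" using M by auto
  have nab: "\<not> a \<le> b" using Mmax[OF aM] MJ bM ab by blast
  have "order_ideal P K" using K(1) by (simp add: connected_ideal_def)
  then show "dn P a \<subseteq> K" using ideal_dn_sub K(3) by blast
  show "K \<subseteq> dn P a"
  proof
    fix x assume x: "x \<in> K"
    show "x \<in> dn P a"
    proof (rule ccontr)
      assume nx: "x \<notin> dn P a"
      have ax: "(a,x) \<in> (hasse_edges P K)\<^sup>*" using K x by (simp add: connected_ideal_def)
      have aa: "a \<in> dn P a" using MP[OF aM] by simp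
      obtain u v where uv: "(u,v) \<in> hasse_edges P K" "u \<in> dn P a" "v \<notin> dn P a"
        using exit_edge[OF ax aa nx] by blast
      have vK: "v \<in> K" "v \<in> P" using uv by (auto simp: hasse_edges_def covers_def)
      have "v \<in> dn P a \<union> dn P b" using Jab[OF M] K(2) vK(1) by blast
      then have "v \<le> b" using uv(3) by blast
      moreover have "v \<noteq> b" using vK(1) K(4) by blast
      ultimately have vb: "v < b" by (simp add: less_le)
      have "covers P u v \<or> covers P v u" using uv by (auto simp: hasse_edges_def)
      then show False
      proof
        assume "covers P v u"
        then have "v \<le> u" by (simp add: covers_def less_imp_le)
        moreover have "u \<le> a" using uv(2) by simp
        ultimately have "v \<le> a" by (rule order_trans)
        then show False using uv(3) vK(2) by simp
      next
        assume cu: "covers P u v"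
        then have uvl: "u < v" "u \<in> P" by (auto simp: covers_def)
        have "u \<noteq> a"
        proof
          assume "u = a"
          then have "a < b" using uvl(1) vb by (metis less_trans)
          then show False using nab by (simp add: less_imp_le)
        qed
        moreover have "u \<le> a" using uv(2) by simp
        ultimately have ua: "u < a" by (simp add: less_le)
        have ub: "u < b" using uvl(1) vb by (rule less_trans)
        have "v \<in> open_interval P u b" using vK uvl vb by (simp add: open_interval_def)
        then have "v \<in> open_interval P u a" using bc uvl(2) ua ub by simp
        then show False using uv by (auto simp: open_interval_def)
      qed
    qed
  qed
qed

end

theorem proposition10p4:
  fixes P J :: "'a::order set"
  assumes "finite P"
    and "connected_ideal P J"
    and "\<not> principal_ideal P J"
  shows "nearly_principal P J \<longleftrightarrow>
    (\<exists>j1 j2. j1 \<noteq> j2 \<and> maximal_elems J = {j1, j2} \<and>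
       (\<forall>l\<in>P. l < j1 \<and> l < j2 \<longrightarrow> open_interval P l j1 = open_interval P l j2))"
proof -
  note fin = assms(1) and conn = assms(2)
  let ?M = "maximal_elems J"
  have Jne: "J \<noteq> {}" using conn by (simp add: connected_ideal_def)
  then have Mne: "?M \<noteq> {}" using below_max[OF finJ[OF fin conn]] by blast
  have notsing: "?M \<noteq> {m}" for m
  proof
    assume e: "?M = {m}"
    have "J = UU P ?M" by (rule JU[OF fin conn])
    then have "J = UU P {m}" by (simp only: e)
    then have "J = dn P m" by (simp only: UU_single)
    moreover have "m \<in> P" using MP[OF fin conn] e by auto
    ultimately show False using assms(3) by (auto simp: principal_ideal_def)
  qed
  show ?thesis
  proof
    assume "nearly_principal P J"
    then have c1: "card (pairs P J) = 1" by (simp add: nearly_principal_def)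
    obtain j1 where j1: "j1 \<in> ?M" using Mne by blast
    obtain j2 where j2: "j2 \<in> ?M" "j2 \<noteq> j1" using notsing[of j1] j1 by blast
    have M2: "?M = {j1, j2}"
    proof (rule ccontr)
      assume "?M \<noteq> {j1, j2}"
      then obtain j3 where j3: "j3 \<in> ?M" "j3 \<noteq> j1" "j3 \<noteq> j2" using j1 j2 by blast
      obtain m1 where m1: "m1 \<in> ?M" "m1 \<noteq> j1" "connected_ideal P (UU P (?M - {m1}))"
        using noncut[OF fin conn j1 notsing] by blast
      obtain m2 where m2: "m2 \<in> ?M" "m2 \<noteq> m1" "connected_ideal P (UU P (?M - {m2}))"
        using noncut[OF fin conn m1(1) notsing] by blast
      have ne1: "?M - {m1} \<noteq> {}" using j1 m1(2) by blast
      have ne2: "?M - {m2} \<noteq> {}" using m1(1) m2(2) by blast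
      note p1 = pair_from[OF fin conn m1(1) ne1 m1(3)]
      note p2 = pair_from[OF fin conn m2(1) ne2 m2(3)]
      have "\<exists>w\<in>{j1,j2,j3}. w \<noteq> m1 \<and> w \<noteq> m2" 
      proof (cases "j1 \<noteq> m1 \<and> j1 \<noteq> m2")
        case True then show ?thesis by blast
      next
        case F1: False
        show ?thesis
        proof (cases "j2 \<noteq> m1 \<and> j2 \<noteq> m2")
          case True then show ?thesis by blast
        next
          case False
          then have "j3 \<noteq> m1 \<and> j3 \<noteq> m2" using F1 j2(2) j3(2,3) by metis
          then show ?thesis by blast
        qed
      qed
      then obtain w where w: "w \<in> ?M" "w \<noteq> m1" "w \<noteq> m2" using j1 j2(1) j3(1) by blast
      have d1: "dn P m1 \<noteq> dn P m2"
      proof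
        assume e: "dn P m1 = dn P m2"
        have "m1 \<in> dn P m1" using MP[OF fin conn m1(1)] by simp
        then have "m1 \<in> dn P m2" by (simp only: e)
        then have "m1 \<le> m2" by simp
        then have "m2 = m1" using Mmax[OF fin conn m1(1)] MJ[OF fin conn] m2(1) by blast
        then show False using m2(2) by simp
      qed
      have d2: "dn P m1 \<noteq> UU P (?M - {m2})"
      proof
        assume e: "dn P m1 = UU P (?M - {m2})"
        have "w \<in> UU P (?M - {m2})" using w MP[OF fin conn w(1)] by blast
        then have "w \<in> dn P m1" by (simp only: e)
        then have "w \<le> m1" by simp
        then have "m1 = w" using Mmax[OF fin conn w(1)] MJ[OF fin conn] m1(1) by blast
        then show False using w(2) by simp
      qed
      have "{dn P m1, UU P (?M - {m1})} \<noteq> {dn P m2, UU P (?M - {m2})}"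
        using d1 d2 by (auto simp: doubleton_eq_iff)
      then have "card (pairs P J) \<noteq> 1" by (rule card_ne1[OF p1 p2])
      then show False using c1 by simp
    qed
    have "\<forall>l\<in>P. l < j1 \<and> l < j2 \<longrightarrow> open_interval P l j1 = open_interval P l j2"
    proof (intro ballI impI)
      fix l assume l: "l \<in> P" "l < j1 \<and> l < j2"
      show "open_interval P l j1 = open_interval P l j2"
      proof (rule ccontr)
        assume ne: "open_interval P l j1 \<noteq> open_interval P l j2"
        then obtain p where "p \<in> open_interval P l j1 \<and> p \<notin> open_interval P l j2
              \<or> p \<in> open_interval P l j2 \<and> p \<notin> open_interval P l j1" by blast
        then show False
        proof
          assume pp: "p \<in> open_interval P l j1 \<and> p \<notin> open_interval P l j2"
          note sp = second_pair[OF fin conn M2 j2(2)[symmetric] l(1) conjunct1[OF l(2)] conjunct2[OF l(2)] conjunct1[OF pp] conjunct2[OF pp]]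
          have "card (pairs P J) \<noteq> 1"
            by (rule card_ne1[OF pair_two[OF fin conn M2 j2(2)[symmetric]] conjunct1[OF sp] conjunct2[OF sp, symmetric]])
          then show False using c1 by simp
        next
          assume pp: "p \<in> open_interval P l j2 \<and> p \<notin> open_interval P l j1"
          have M2': "?M = {j2, j1}" using M2 by auto
          note sp = second_pair[OF fin conn M2' j2(2) l(1) conjunct2[OF l(2)] conjunct1[OF l(2)] conjunct1[OF pp] conjunct2[OF pp]]
          have "card (pairs P J) \<noteq> 1"
            by (rule card_ne1[OF pair_two[OF fin conn M2' j2(2)] conjunct1[OF sp] conjunct2[OF sp, symmetric]])
          then show False using c1 by simp
        qed
      qed
    qed
    then show "\<exists>j1 j2. j1 \<noteq> j2 \<and> ?M = {j1, j2} \<and>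
       (\<forall>l\<in>P. l < j1 \<and> l < j2 \<longrightarrow> open_interval P l j1 = open_interval P l j2)"
      using M2 j2 by blast
  next
    assume "\<exists>j1 j2. j1 \<noteq> j2 \<and> ?M = {j1, j2} \<and>
       (\<forall>l\<in>P. l < j1 \<and> l < j2 \<longrightarrow> open_interval P l j1 = open_interval P l j2)"
    then obtain a b where ab: "a \<noteq> b" and M: "?M = {a,b}"
      and bc: "\<forall>l\<in>P. l < a \<and> l < b \<longrightarrow> open_interval P l a = open_interval P l b" by blast
    have M': "?M = {b,a}" using M by auto
    have bc': "\<forall>l\<in>P. l < b \<and> l < a \<longrightarrow> open_interval P l b = open_interval P l a" using bc by auto
    have Jd: "J = dn P a \<union> dn P b" using Jab[OF fin conn M] .
    have "pairs P J = {{dn P a, dn P b}}"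
    proof
      show "{{dn P a, dn P b}} \<subseteq> pairs P J" using pair_two[OF fin conn M ab] by blast
      show "pairs P J \<subseteq> {{dn P a, dn P b}}"
      proof
        fix x assume "x \<in> pairs P J"
        then obtain K1 K2 where x: "x = {K1,K2}" and c1: "connected_ideal P K1" and c2: "connected_ideal P K2"
          and nt: "intersect_nontrivially K1 K2" and u: "K1 \<union> K2 = J" by blast
        have i1: "order_ideal P K1" and i2: "order_ideal P K2" using c1 c2 by (auto simp: connected_ideal_def)
        have aJ: "a \<in> J" and bJ: "b \<in> J" using M MJ[OF fin conn] by auto
        have no1: "\<not> (a \<in> K1 \<and> b \<in> K1)"
        proof
          assume "a \<in> K1 \<and> b \<in> K1"
          then have "J \<subseteq> K1" using Jd ideal_dn_sub[OF i1] by blast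
          then show False using nt u by (auto simp: intersect_nontrivially_def)
        qed
        have no2: "\<not> (a \<in> K2 \<and> b \<in> K2)"
        proof
          assume "a \<in> K2 \<and> b \<in> K2"
          then have "J \<subseteq> K2" using Jd ideal_dn_sub[OF i2] by blast
          then show False using nt u by (auto simp: intersect_nontrivially_def)
        qed
        have s1: "K1 \<subseteq> J" and s2: "K2 \<subseteq> J" using u by auto
        show "x \<in> {{dn P a, dn P b}}"
        proof (cases "a \<in> K1")
          case True
          then have h: "b \<notin> K1" "b \<in> K2" "a \<notin> K2" using no1 no2 u bJ by auto
          have "K1 = dn P a" "K2 = dn P b"
            using uniq[OF fin conn M ab bc c1 s1 True h(1)] uniq[OF fin conn M' ab[symmetric] bc' c2 s2 h(2,3)] by auto
          then show ?thesis using x by simp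
        next
          case False
          then have h: "a \<in> K2" "b \<notin> K2" "b \<in> K1" using no1 no2 u aJ bJ by auto
          have "K2 = dn P a" "K1 = dn P b"
            using uniq[OF fin conn M ab bc c2 s2 h(1,2)] uniq[OF fin conn M' ab[symmetric] bc' c1 s1 h(3) False] by auto
          then show ?thesis using x by auto
        qed
      qed
    qed
    then show "nearly_principal P J" using conn assms(3) by (simp add: nearly_principal_def)
  qed
qed

end
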